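(* Assume (A1). Then there is a function $\varepsilon_f\colon\mathbb{R}_+\to\mathbb{R}_+$ with $\varepsilon_f(r)\to0$ as $r\to\infty$ such that for every $\theta\in\mathbb{R}^d$, every initial condition $\Phi_0\in\Omega$, every $T>0$ and every $\alpha>0$, $$\left\|\frac1T\int_0^T\big[f(\theta,\xi^\alpha_t)-\bar f(\theta)\big]\,dt\right\|\le\big(1+\|\theta\|\big)\,\varepsilon_f(T/\alpha),$$ where $\xi^\alpha_t=\xi_{t/\alpha}$.
   Context: Setting. Fix $d,m,K\ge1$, frequencies $\omega_i>0$, phases $\phi_i$; clock process $\frac{d}{dt}\Phi_t=W\Phi_t$, $W=2\pi j\,\mathrm{diag}(\omega_i)$, $\Phi^i_t=\exp(2\pi j[\omega_it+\phi_i])$; $\Omega$ the closure of its orbit (compact, flow invariant, any point may be the initial condition), $\pi$ the uniform (Haar) probability on $\Omega$. Probing signal $\xi_t=G(\Phi_t)$ with $G(z)=G_0((z+1/z)/2)$, $G_0\colon\mathbb{R}^K\to\mathbb{R}^m$ analytic with absolutely summable Taylor coefficients. $f\colon\mathbb{R}^d\times\mathbb{R}^m\to\mathbb{R}^d$ continuous, $\bar f(\theta)=\int_\Omega f(\theta,G(z))\pi(dz)$. (A1): there is $L_f$ with $\|\bar f(\theta')-\bar f(\theta)\|\le L_f\|\theta'-\theta\|$ and $\|f(\theta',\xi)-f(\theta,\xi)\|+\|f(\theta,\xi')-f(\theta,\xi)\|\le L_f[\|\theta'-\theta\|+\|\xi'-\xi\|]$. *)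

theory Defs
  imports "HOL-Probability.Probability"
begin

definition clock :: "real^'k \<Rightarrow> real^'k \<Rightarrow> real \<Rightarrow> complex^'k" where
  "clock \<omega> \<phi> t = (\<chi> i. cis (2 * pi * (\<omega>$i * t + \<phi>$i)))"

text \<open>Flow of d/dt Phi = W Phi, W = 2 pi j diag(omega), started at z0.\<close>
definition clock_flow :: "real^'k \<Rightarrow> real \<Rightarrow> complex^'k \<Rightarrow> complex^'k" where
  "clock_flow \<omega> t z0 = (\<chi> i. cis (2 * pi * \<omega>$i * t) * z0$i)"

definition clock_Omega :: "real^'k \<Rightarrow> real^'k \<Rightarrow> (complex^'k) set" where
  "clock_Omega \<omega> \<phi> = closure (range (clock \<omega> \<phi>))"

text \<open>The closed subgroup H of the torus generated by the flow; Omega is a coset of H.\<close>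
definition clock_group :: "real^'k \<Rightarrow> (complex^'k) set" where
  "clock_group \<omega> = closure (range (\<lambda>t. (\<chi> i. cis (2 * pi * \<omega>$i * t)) :: complex^'k))"

definition is_haar_on_Omega :: "real^'k \<Rightarrow> real^'k \<Rightarrow> (complex^'k) measure \<Rightarrow> bool" where
  "is_haar_on_Omega \<omega> \<phi> \<pi> \<longleftrightarrow>
     prob_space \<pi> \<and> space \<pi> = clock_Omega \<omega> \<phi> \<and>
     sets \<pi> = sets (restrict_space borel (clock_Omega \<omega> \<phi>)) \<and>
     (\<forall>h\<in>clock_group \<omega>. \<forall>A\<in>sets \<pi>.
        emeasure \<pi> ((\<lambda>z. (\<chi> i. h$i * z$i)) -` A \<inter> space \<pi>) = emeasure \<pi> A)"

text \<open>G(z) = G0((z + 1/z)/2), taken componentwise (real part; it is real on Omega).\<close>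
definition probe_G :: "(real^'k \<Rightarrow> real^'m) \<Rightarrow> complex^'k \<Rightarrow> real^'m" where
  "probe_G G0 z = G0 (\<chi> i. Re ((z$i + inverse (z$i)) / 2))"

end

theory Submission
  imports Defs
begin

definition torus :: "(complex^'k) set" where "torus = {z. \<forall>i. norm (z$i) = 1}"

definition chi :: "('k \<Rightarrow> int) \<Rightarrow> complex^'k \<Rightarrow> complex" where
  "chi n z = (\<Prod>i\<in>UNIV. if n i \<ge> 0 then z$i ^ nat (n i) else cnj (z$i) ^ nat (- n i))"

lemma flow_add: "clock_flow \<omega> s (clock_flow \<omega> t z) = clock_flow \<omega> (s+t) z"
  unfolding clock_flow_def by (simp add: vec_eq_iff cis_mult distrib_left mult.assoc algebra_simps)

lemma clock_eq: "clock \<omega> \<phi> t = clock_flow \<omega> t (clock \<omega> \<phi> 0)"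
  unfolding clock_flow_def clock_def by (simp add: vec_eq_iff cis_mult algebra_simps)

lemma cont_flow_z: "continuous_on A (clock_flow \<omega> t)"
  unfolding clock_flow_def by (intro continuous_on_vec_lambda continuous_intros)

lemma cont_flow_t: "continuous_on A (\<lambda>t. clock_flow \<omega> (g t) z)" if "continuous_on A g"
  unfolding clock_flow_def using that by (intro continuous_on_vec_lambda continuous_intros) 

lemma torus_closed: "closed (torus :: (complex^'k) set)"
proof -
  have "torus = (\<Inter>i. {z::complex^'k. norm (z$i) = 1})" unfolding torus_def by auto
  moreover have "closed {z::complex^'k. norm (z$i) = 1}" for i
    by (intro closed_Collect_eq continuous_intros)
  ultimately show ?thesis using closed_INT[of UNIV "\<lambda>i. {z::complex^'k. norm (z$i) = 1}"] by simp
qed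

lemma torus_bounded: "bounded (torus :: (complex^'k) set)"
proof -
  have "z \<in> torus \<Longrightarrow> norm z = sqrt (real CARD('k))" for z :: "complex^'k"
    unfolding torus_def norm_vec_def L2_set_def by simp
  then show ?thesis unfolding bounded_iff by (metis order_refl)
qed

lemma clock_torus: "clock \<omega> \<phi> t \<in> torus"
  unfolding torus_def clock_def by simp

lemma flow_torus: "z \<in> torus \<Longrightarrow> clock_flow \<omega> t z \<in> torus"
  unfolding torus_def clock_flow_def by (simp add: norm_mult)

lemma Omega_torus: "clock_Omega \<omega> \<phi> \<subseteq> torus"
  unfolding clock_Omega_def using clock_torus torus_closed
  by (metis closure_minimal image_subsetI)

lemma Omega_compact: "compact (clock_Omega \<omega> \<phi>)"
proof -
  have "range (clock \<omega> \<phi>) \<subseteq> torus" using clock_torus by auto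
  then have "bounded (range (clock \<omega> \<phi>))" using torus_bounded bounded_subset by blast
  then show ?thesis unfolding clock_Omega_def by (simp add: compact_closure)
qed

lemma Omega_ne: "clock \<omega> \<phi> 0 \<in> clock_Omega \<omega> \<phi>"
  unfolding clock_Omega_def by (meson closure_subset rangeI subsetD)

lemma flow_Omega: "z \<in> clock_Omega \<omega> \<phi> \<Longrightarrow> clock_flow \<omega> t z \<in> clock_Omega \<omega> \<phi>"
proof -
  have "clock_flow \<omega> t ` range (clock \<omega> \<phi>) \<subseteq> clock_Omega \<omega> \<phi>"
  proof
    fix x assume "x \<in> clock_flow \<omega> t ` range (clock \<omega> \<phi>)"
    then obtain s where "x = clock_flow \<omega> t (clock \<omega> \<phi> s)" by auto
    then have "x = clock \<omega> \<phi> (t + s)" by (metis clock_eq flow_add)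
    then show "x \<in> clock_Omega \<omega> \<phi>" unfolding clock_Omega_def by (meson closure_subset rangeI subsetD)
  qed
  then have "clock_flow \<omega> t ` clock_Omega \<omega> \<phi> \<subseteq> clock_Omega \<omega> \<phi>"
    unfolding clock_Omega_def by (intro image_closure_subset cont_flow_z) auto
  then show "z \<in> clock_Omega \<omega> \<phi> \<Longrightarrow> clock_flow \<omega> t z \<in> clock_Omega \<omega> \<phi>" by auto
qed

lemma chi_cont: "continuous_on A (chi n)"
  unfolding chi_def
proof (intro continuous_on_prod)
  fix i show "continuous_on A (\<lambda>x. if 0 \<le> n i then x $ i ^ nat (n i) else cnj (x $ i) ^ nat (- n i))"
    by (cases "0 \<le> n i") (auto intro!: continuous_intros)
qed

lemma cis_sum: "(\<Prod>i\<in>I. cis (f i)) = cis (\<Sum>i\<in>I. f i)"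
  by (induction I rule: infinite_finite_induct) (auto simp: cis_mult)

lemma chi_flow: "chi n (clock_flow \<omega> s z) = cis (2 * pi * (\<Sum>i\<in>UNIV. of_int (n i) * \<omega>$i) * s) * chi n z"
proof -
  have "(if n i \<ge> 0 then (clock_flow \<omega> s z)$i ^ nat (n i) else cnj ((clock_flow \<omega> s z)$i) ^ nat (- n i))
     = cis (2 * pi * (of_int (n i) * \<omega>$i) * s) * (if n i \<ge> 0 then z$i ^ nat (n i) else cnj (z$i) ^ nat (- n i))" for i
  proof (cases "n i \<ge> 0")
    case True
    then show ?thesis unfolding clock_flow_def
      by (simp add: power_mult_distrib Complex.DeMoivre algebra_simps)
  next
    case False
    then show ?thesis unfolding clock_flow_def
      by (simp add: power_mult_distrib Complex.DeMoivre cis_cnj algebra_simps)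
  qed
  then have "chi n (clock_flow \<omega> s z) = (\<Prod>i\<in>UNIV. cis (2 * pi * (of_int (n i) * \<omega>$i) * s)) * chi n z"
    unfolding chi_def by (simp only: prod.distrib)
  also have "(\<Prod>i\<in>UNIV. cis (2 * pi * (of_int (n i) * \<omega>$i) * s)) = cis (\<Sum>i\<in>UNIV. 2 * pi * (of_int (n i) * \<omega>$i) * s)"
    by (rule cis_sum)
  also have "(\<Sum>i\<in>UNIV. 2 * pi * (of_int (n i) * \<omega>$i) * s) = 2 * pi * (\<Sum>i\<in>UNIV. of_int (n i) * \<omega>$i) * s"
    by (simp add: sum_distrib_left sum_distrib_right)
  finally show ?thesis .
qed

lemma chi_norm: "z \<in> torus \<Longrightarrow> norm (chi n z) = 1"
proof -
  assume z: "z \<in> torus"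
  have "norm (if n i \<ge> 0 then z$i ^ nat (n i) else cnj (z$i) ^ nat (- n i)) = 1" for i
    using z unfolding torus_def by (simp add: norm_power)
  then show ?thesis unfolding chi_def prod_norm[symmetric] by simp
qed

lemma torus_cnj: "z \<in> torus \<Longrightarrow> cnj (z$i) = inverse (z$i)"
proof -
  assume "z \<in> torus"
  then have "norm (z$i) = 1" unfolding torus_def by simp
  then have "z$i * cnj (z$i) = 1" using complex_norm_square[of "z$i"] by simp
  then show ?thesis by (metis inverse_unique)
qed

lemma chi_powi: "z \<in> torus \<Longrightarrow> chi n z = (\<Prod>i\<in>UNIV. (z$i) powi (n i))"
  unfolding chi_def by (intro prod.cong refl) (auto simp: power_int_def torus_cnj power_inverse)

lemma chi_add: "z \<in> torus \<Longrightarrow> chi (\<lambda>i. n i + m i) z = chi n z * chi m z"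
proof -
  assume z: "z \<in> torus"
  have nz: "z$i \<noteq> 0" for i
  proof
    have "norm (z$i) = 1" using z unfolding torus_def by simp
    moreover assume "z$i = 0"
    ultimately show False by simp
  qed
  then have "(\<Prod>i\<in>UNIV. (z$i) powi (n i + m i)) = (\<Prod>i\<in>UNIV. (z$i) powi (n i) * (z$i) powi (m i))"
    by (intro prod.cong refl power_int_add) (use nz in blast)
  then show ?thesis using z by (simp only: chi_powi prod.distrib)
qed

lemma chi_cnj: "z \<in> torus \<Longrightarrow> cnj (chi n z) = chi (\<lambda>i. - n i) z"
  unfolding chi_def by (auto intro!: prod.cong simp: torus_cnj)

lemma chi_zero: "chi (\<lambda>i. 0) z = 1"
  unfolding chi_def by simp

lemma chi_unit: "chi (\<lambda>j. if j = i then 1 else 0) z = z$i"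
proof -
  have "chi (\<lambda>j. if j = i then 1 else 0) z = (\<Prod>j\<in>UNIV. if j = i then z$i else 1)"
    unfolding chi_def by (intro prod.cong) auto
  then show ?thesis by simp
qed

locale clk =
  fixes \<omega> \<phi> :: "real^'k" and \<pi> :: "(complex^'k) measure"
  assumes haar: "is_haar_on_Omega \<omega> \<phi> \<pi>"
begin

abbreviation "Om \<equiv> clock_Omega \<omega> \<phi>"

lemma prob: "prob_space \<pi>" using haar unfolding is_haar_on_Omega_def by blast
lemma space_pi: "space \<pi> = Om" using haar unfolding is_haar_on_Omega_def by blast
lemma sets_pi: "sets \<pi> = sets (restrict_space borel Om)" using haar unfolding is_haar_on_Omega_def by blast

lemma meas_cont: "continuous_on Om F \<Longrightarrow> F \<in> borel_measurable \<pi>"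
  using measurable_cong_sets[OF sets_pi refl] borel_measurable_continuous_on_restrict by blast

lemma integrable_cont:
  fixes F :: "complex^'k \<Rightarrow> 'b::{banach,second_countable_topology}"
  assumes "continuous_on Om F" shows "integrable \<pi> F"
proof -
  interpret prob_space \<pi> by (rule prob)
  have "compact (F ` Om)" using compact_continuous_image[OF assms Omega_compact] .
  then obtain B where B: "\<forall>y\<in>F ` Om. norm y \<le> B" using compact_imp_bounded bounded_iff by metis
  show ?thesis
  proof (rule integrable_const_bound[of _ B])
    show "AE x in \<pi>. norm (F x) \<le> B" using B space_pi by (intro AE_I2) auto
  qed (rule meas_cont[OF assms])
qed

lemma flow_meas: "clock_flow \<omega> t \<in> measurable \<pi> \<pi>"
proof -
  have "clock_flow \<omega> t \<in> measurable (restrict_space borel Om) (restrict_space borel Om)"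
    by (intro measurable_restrict_space3 borel_measurable_continuous_onI cont_flow_z) (auto intro: flow_Omega)
  then show ?thesis using measurable_cong_sets[OF sets_pi sets_pi] by blast
qed

lemma distr_flow: "distr \<pi> \<pi> (clock_flow \<omega> t) = \<pi>"
proof (rule measure_eqI)
  show "sets (distr \<pi> \<pi> (clock_flow \<omega> t)) = sets \<pi>" by simp
  fix A assume "A \<in> sets (distr \<pi> \<pi> (clock_flow \<omega> t))"
  then have A: "A \<in> sets \<pi>" by simp
  have h: "(\<chi> i. cis (2 * pi * \<omega>$i * t)) \<in> clock_group \<omega>"
    unfolding clock_group_def by (meson closure_subset rangeI subsetD)
  have eq: "(\<lambda>z. (\<chi> i. (\<chi> i. cis (2 * pi * \<omega>$i * t))$i * z$i)) = clock_flow \<omega> t"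
    unfolding clock_flow_def by (simp add: fun_eq_iff)
  have "emeasure \<pi> ((\<lambda>z. (\<chi> i. (\<chi> i. cis (2 * pi * \<omega>$i * t))$i * z$i)) -` A \<inter> space \<pi>) = emeasure \<pi> A"
    using haar h A unfolding is_haar_on_Omega_def by blast
  then show "emeasure (distr \<pi> \<pi> (clock_flow \<omega> t)) A = emeasure \<pi> A"
    using emeasure_distr[OF flow_meas A] eq by simp
qed

lemma integral_flow_inv:
  fixes F :: "complex^'k \<Rightarrow> 'b::{banach,second_countable_topology}"
  assumes "F \<in> borel_measurable \<pi>"
  shows "(\<integral>z. F (clock_flow \<omega> t z) \<partial>\<pi>) = integral\<^sup>L \<pi> F"
  using integral_distr[OF flow_meas assms] distr_flow by simp

definition avg :: "real \<Rightarrow> real \<Rightarrow> (complex^'k \<Rightarrow> real) \<Rightarrow> complex^'k \<Rightarrow> real" where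
  "avg T \<alpha> F z0 = (1/T) * integral {0..T} (\<lambda>t. F (clock_flow \<omega> (t/\<alpha>) z0))"

definition Good :: "(complex^'k \<Rightarrow> real) \<Rightarrow> bool" where
  "Good F \<longleftrightarrow> continuous_on Om F \<and>
     (\<forall>e>0. \<exists>R0. \<forall>T \<alpha> z0. 0 < T \<longrightarrow> 0 < \<alpha> \<longrightarrow> R0 \<le> T/\<alpha> \<longrightarrow> z0 \<in> Om \<longrightarrow>
        \<bar>avg T \<alpha> F z0 - integral\<^sup>L \<pi> F\<bar> \<le> e)"

lemma cont_path:
  fixes F :: "complex^'k \<Rightarrow> 'b::real_normed_vector"
  assumes "continuous_on Om F" "z0 \<in> Om"
  shows "continuous_on A (\<lambda>t. F (clock_flow \<omega> (t/\<alpha>) z0))"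
  by (rule continuous_on_compose2[OF assms(1) cont_flow_t]) (auto intro: linear_continuous_on[OF bounded_linear_divide] flow_Omega assms(2))

lemma integrable_path:
  fixes F :: "complex^'k \<Rightarrow> 'b::banach"
  assumes "continuous_on Om F" "z0 \<in> Om"
  shows "(\<lambda>t. F (clock_flow \<omega> (t/\<alpha>) z0)) integrable_on {a..b}"
  by (rule integrable_continuous_interval[OF cont_path[OF assms]])

lemma avg_diff:
  assumes "continuous_on Om F" "continuous_on Om G" "z0 \<in> Om"
  shows "avg T \<alpha> (\<lambda>z. F z - G z) z0 = avg T \<alpha> F z0 - avg T \<alpha> G z0"
  unfolding avg_def using integral_diff[OF integrable_path[OF assms(1,3)] integrable_path[OF assms(2,3)]]
  by (simp add: right_diff_distrib)

lemma avg_add: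
  assumes "continuous_on Om F" "continuous_on Om G" "z0 \<in> Om"
  shows "avg T \<alpha> (\<lambda>z. F z + G z) z0 = avg T \<alpha> F z0 + avg T \<alpha> G z0"
  unfolding avg_def using integral_add[OF integrable_path[OF assms(1,3)] integrable_path[OF assms(2,3)]]
  by (simp add: distrib_left)

lemma avg_bound:
  fixes H :: "complex^'k \<Rightarrow> real"
  assumes "continuous_on Om H" "z0 \<in> Om" "0 < T" "\<forall>z\<in>Om. \<bar>H z\<bar> \<le> B"
  shows "\<bar>avg T \<alpha> H z0\<bar> \<le> B"
proof -
  have "norm (integral {0..T} (\<lambda>t. H (clock_flow \<omega> (t/\<alpha>) z0))) \<le> B * (T - 0)"
    using assms by (intro integral_bound cont_path) (auto intro: flow_Omega)
  then show ?thesis using assms(3) unfolding avg_def by (simp add: abs_mult field_simps)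
qed

lemma int_bound:
  fixes H :: "complex^'k \<Rightarrow> real"
  assumes "continuous_on Om H" "\<forall>z\<in>Om. \<bar>H z\<bar> \<le> B"
  shows "\<bar>integral\<^sup>L \<pi> H\<bar> \<le> B"
proof -
  interpret prob_space \<pi> by (rule prob)
  have "norm (integral\<^sup>L \<pi> H) \<le> (\<integral>x. norm (H x) \<partial>\<pi>)" by (rule Bochner_Integration.integral_norm_bound)
  also have "\<dots> \<le> (\<integral>x. B \<partial>\<pi>)"
    using assms space_pi by (intro integral_mono integrable_cont continuous_intros) auto
  also have "\<dots> = B" by (simp add: prob_space)
  finally show ?thesis by simp
qed

lemma Good_cong: "Good F \<Longrightarrow> (\<And>z. z \<in> Om \<Longrightarrow> F z = G z) \<Longrightarrow> Good G"
proof -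
  assume g: "Good F" and eq: "\<And>z. z \<in> Om \<Longrightarrow> F z = G z"
  have c: "continuous_on Om G" using g eq continuous_on_cong unfolding Good_def by blast
  have i: "integral\<^sup>L \<pi> F = integral\<^sup>L \<pi> G" using eq space_pi by (intro Bochner_Integration.integral_cong) auto
  have a: "avg T \<alpha> F z0 = avg T \<alpha> G z0" if "z0 \<in> Om" for T \<alpha> z0
    unfolding avg_def using eq flow_Omega[OF that] by (intro arg_cong[where f="\<lambda>x. (1/T) * x"] integral_cong) auto
  show "Good G" using g c i a unfolding Good_def by metis
qed

lemma Good_zero: "Good (\<lambda>z. 0)"
  unfolding Good_def avg_def by auto

lemma Good_add: assumes "Good F" "Good G" shows "Good (\<lambda>z. F z + G z)"
proof -
  have cF: "continuous_on Om F" and cG: "continuous_on Om G" using assms unfolding Good_def by auto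
  have i: "integral\<^sup>L \<pi> (\<lambda>z. F z + G z) = integral\<^sup>L \<pi> F + integral\<^sup>L \<pi> G"
    by (intro Bochner_Integration.integral_add integrable_cont cF cG)
  show ?thesis unfolding Good_def
  proof (intro conjI allI impI)
    show "continuous_on Om (\<lambda>z. F z + G z)" by (intro continuous_intros cF cG)
    fix e :: real assume e: "0 < e"
    obtain R1 where R1: "\<forall>T \<alpha> z0. 0 < T \<longrightarrow> 0 < \<alpha> \<longrightarrow> R1 \<le> T/\<alpha> \<longrightarrow> z0 \<in> Om \<longrightarrow>
        \<bar>avg T \<alpha> F z0 - integral\<^sup>L \<pi> F\<bar> \<le> e/2" using assms(1) e unfolding Good_def by (meson half_gt_zero)
    obtain R2 where R2: "\<forall>T \<alpha> z0. 0 < T \<longrightarrow> 0 < \<alpha> \<longrightarrow> R2 \<le> T/\<alpha> \<longrightarrow> z0 \<in> Om \<longrightarrow>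
        \<bar>avg T \<alpha> G z0 - integral\<^sup>L \<pi> G\<bar> \<le> e/2" using assms(2) e unfolding Good_def by (meson half_gt_zero)
    show "\<exists>R0. \<forall>T \<alpha> z0. 0 < T \<longrightarrow> 0 < \<alpha> \<longrightarrow> R0 \<le> T/\<alpha> \<longrightarrow> z0 \<in> Om \<longrightarrow>
        \<bar>avg T \<alpha> (\<lambda>z. F z + G z) z0 - integral\<^sup>L \<pi> (\<lambda>z. F z + G z)\<bar> \<le> e"
    proof (intro exI[of _ "max R1 R2"] allI impI)
      fix T \<alpha> z0 assume *: "0 < T" "0 < \<alpha>" "max R1 R2 \<le> T/\<alpha>" "z0 \<in> Om"
      have "\<bar>avg T \<alpha> F z0 - integral\<^sup>L \<pi> F\<bar> \<le> e/2" "\<bar>avg T \<alpha> G z0 - integral\<^sup>L \<pi> G\<bar> \<le> e/2"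
        using R1 R2 * by auto
      then show "\<bar>avg T \<alpha> (\<lambda>z. F z + G z) z0 - integral\<^sup>L \<pi> (\<lambda>z. F z + G z)\<bar> \<le> e"
        using avg_add[OF cF cG *(4), of T \<alpha>] i by linarith
    qed
  qed
qed

lemma Good_approx:
  assumes cF: "continuous_on Om F" and ap: "\<And>e. e > 0 \<Longrightarrow> \<exists>G. Good G \<and> (\<forall>z\<in>Om. \<bar>F z - G z\<bar> \<le> e)"
  shows "Good F"
  unfolding Good_def
proof (intro conjI allI impI cF)
  fix e :: real assume e: "0 < e"
  obtain G where G: "Good G" "\<forall>z\<in>Om. \<bar>F z - G z\<bar> \<le> e/3" using ap[of "e/3"] e by auto
  have cG: "continuous_on Om G" using G unfolding Good_def by auto
  obtain R1 where R1: "\<forall>T \<alpha> z0. 0 < T \<longrightarrow> 0 < \<alpha> \<longrightarrow> R1 \<le> T/\<alpha> \<longrightarrow> z0 \<in> Om \<longrightarrow>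
        \<bar>avg T \<alpha> G z0 - integral\<^sup>L \<pi> G\<bar> \<le> e/3" using G(1) e unfolding Good_def by (meson divide_pos_pos zero_less_numeral)
  have cD: "continuous_on Om (\<lambda>z. F z - G z)" by (intro continuous_intros cF cG)
  have i: "integral\<^sup>L \<pi> (\<lambda>z. F z - G z) = integral\<^sup>L \<pi> F - integral\<^sup>L \<pi> G"
    by (intro Bochner_Integration.integral_diff integrable_cont cF cG)
  have ib: "\<bar>integral\<^sup>L \<pi> (\<lambda>z. F z - G z)\<bar> \<le> e/3" by (rule int_bound[OF cD G(2)])
  show "\<exists>R0. \<forall>T \<alpha> z0. 0 < T \<longrightarrow> 0 < \<alpha> \<longrightarrow> R0 \<le> T/\<alpha> \<longrightarrow> z0 \<in> Om \<longrightarrow>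
        \<bar>avg T \<alpha> F z0 - integral\<^sup>L \<pi> F\<bar> \<le> e"
  proof (intro exI[of _ R1] allI impI)
    fix T \<alpha> z0 assume *: "0 < T" "0 < \<alpha>" "R1 \<le> T/\<alpha>" "z0 \<in> Om"
    have "\<bar>avg T \<alpha> (\<lambda>z. F z - G z) z0\<bar> \<le> e/3" by (rule avg_bound[OF cD *(4) *(1) G(2)])
    moreover have "\<bar>avg T \<alpha> G z0 - integral\<^sup>L \<pi> G\<bar> \<le> e/3" using R1 * by blast
    ultimately show "\<bar>avg T \<alpha> F z0 - integral\<^sup>L \<pi> F\<bar> \<le> e"
      using avg_diff[OF cF cG *(4), of T \<alpha>] i ib by linarith
  qed
qed

end

fun tsum :: "(complex \<times> ('k \<Rightarrow> int)) list \<Rightarrow> complex^'k \<Rightarrow> complex" where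
  "tsum [] z = 0"
| "tsum ((c,n)#xs) z = c * chi n z + tsum xs z"

lemma tsum_append: "tsum (xs @ ys) z = tsum xs z + tsum ys z"
  by (induction xs z rule: tsum.induct) auto

definition mulp :: "complex \<times> ('k \<Rightarrow> int) \<Rightarrow> (complex \<times> ('k \<Rightarrow> int)) list \<Rightarrow> (complex \<times> ('k \<Rightarrow> int)) list" where
  "mulp x ys = map (\<lambda>(d,m). (fst x * d / 2, \<lambda>i. snd x i + m i)) ys @ map (\<lambda>(d,m). (fst x * cnj d / 2, \<lambda>i. snd x i - m i)) ys"

fun prodl where
  "prodl [] ys = []"
| "prodl (x#xs) ys = mulp x ys @ prodl xs ys"

lemma tsum_map1: "z \<in> torus \<Longrightarrow> tsum (map (\<lambda>(d,m). (c * d / 2, \<lambda>i. n i + m i)) ys) z = c / 2 * chi n z * tsum ys z"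
proof (induction ys)
  case Nil then show ?case by simp
next
  case (Cons a ys)
  obtain d m where a: "a = (d, m)" by force
  show ?case using Cons by (simp add: a chi_add algebra_simps)
qed

lemma tsum_map2: "z \<in> torus \<Longrightarrow> tsum (map (\<lambda>(d,m). (c * cnj d / 2, \<lambda>i. n i - m i)) ys) z = c / 2 * chi n z * cnj (tsum ys z)"
proof (induction ys)
  case Nil then show ?case by simp
next
  case (Cons a ys)
  obtain d m where a: "a = (d, m)" by force
  have e: "(\<lambda>i. n i - m i) = (\<lambda>i. n i + (- m i))" by simp
  have "chi (\<lambda>i. n i - m i) z = chi n z * cnj (chi m z)"
    unfolding e chi_add[OF Cons.prems] chi_cnj[OF Cons.prems] ..
  then show ?case using Cons by (simp add: a algebra_simps)
qed

lemma Re_prod_aux: "Re (a * b) / 2 + Re (a * cnj b) / 2 = Re a * Re b"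
  apply simp
  by (simp add: field_simps)

lemma tsum_mulp: "z \<in> torus \<Longrightarrow> Re (tsum (mulp (c,n) ys) z) = Re (c * chi n z) * Re (tsum ys z)"
proof -
  assume z: "z \<in> torus"
  have "tsum (mulp (c,n) ys) z = c / 2 * chi n z * tsum ys z + c / 2 * chi n z * cnj (tsum ys z)"
    unfolding mulp_def tsum_append fst_conv snd_conv tsum_map1[OF z] tsum_map2[OF z] ..
  also have "\<dots> = ((c * chi n z) * tsum ys z) / 2 + ((c * chi n z) * cnj (tsum ys z)) / 2"
    by (simp add: algebra_simps)
  finally have "Re (tsum (mulp (c,n) ys) z) = Re ((c * chi n z) * tsum ys z) / 2 + Re ((c * chi n z) * cnj (tsum ys z)) / 2"
    by simp
  then show ?thesis using Re_prod_aux[of "c * chi n z" "tsum ys z"] by (simp only:)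
qed

lemma tsum_prodl: "z \<in> torus \<Longrightarrow> Re (tsum (prodl xs ys) z) = Re (tsum xs z) * Re (tsum ys z)"
proof (induction xs)
  case Nil then show ?case by simp
next
  case (Cons a xs)
  obtain c n where a: "a = (c, n)" by force
  show ?case using Cons tsum_mulp[OF Cons.prems, of c n ys] by (simp add: a tsum_append algebra_simps)
qed

definition rep :: "(complex^'k \<Rightarrow> real) \<Rightarrow> bool" where
  "rep p \<longleftrightarrow> (\<exists>xs. \<forall>z\<in>torus. p z = Re (tsum xs z))"

lemma rep_sum: "finite S \<Longrightarrow> (\<And>b. b \<in> S \<Longrightarrow> rep (g b)) \<Longrightarrow> rep (\<lambda>z. \<Sum>b\<in>S. g b z)"
proof (induction S rule: finite_induct)
  case empty
  show ?case unfolding rep_def by (intro exI[of _ "[]"]) simp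
next
  case (insert x F)
  obtain xs where xs: "\<forall>z\<in>torus. g x z = Re (tsum xs z)" using insert.prems unfolding rep_def by blast
  obtain ys where ys: "\<forall>z\<in>torus. (\<Sum>b\<in>F. g b z) = Re (tsum ys z)" using insert unfolding rep_def by blast
  show ?case unfolding rep_def
    by (intro exI[of _ "xs @ ys"]) (simp add: insert.hyps xs ys tsum_append)
qed

lemma rep_poly: "real_polynomial_function p \<Longrightarrow> rep (p :: complex^'k \<Rightarrow> real)"
proof (induction rule: real_polynomial_function.induct)
  case (linear f)
  have lin: "linear f" using linear.hyps bounded_linear.linear by blast
  have eq: "f z = (\<Sum>b\<in>Basis. inner z b * f b)" for z
  proof -
    have "f z = f (\<Sum>b\<in>Basis. inner z b *\<^sub>R b)" by (simp add: euclidean_representation)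
    also have "\<dots> = (\<Sum>b\<in>Basis. inner z b * f b)" using lin by (simp add: linear_sum linear_scale)
    finally show ?thesis .
  qed
  have "rep (\<lambda>z. inner z b * f b)" if b: "b \<in> (Basis :: (complex^'k) set)" for b
  proof -
    obtain i u where bu: "b = axis i u" "u \<in> (Basis :: complex set)" using b unfolding Basis_vec_def by blast
    have "inner z b * f b = Re (complex_of_real (f b) * cnj u * chi (\<lambda>j. if j = i then 1 else 0) z)" for z
      unfolding bu(1) inner_axis chi_unit inner_complex_def by (simp add: algebra_simps)
    then show ?thesis unfolding rep_def
      by (intro exI[of _ "[(complex_of_real (f b) * cnj u, \<lambda>j. if j = i then 1 else 0)]"]) simp
  qed
  then have "rep (\<lambda>z. \<Sum>b\<in>Basis. inner z b * f b)" by (intro rep_sum) auto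
  moreover have "(\<lambda>z. \<Sum>b\<in>Basis. inner z b * f b) = f" by (rule ext) (rule eq[symmetric])
  ultimately show ?case by simp
next
  case (const c)
  show ?case unfolding rep_def by (intro exI[of _ "[(complex_of_real c, \<lambda>i. 0)]"]) (simp add: chi_zero)
next
  case (add f g)
  then obtain xs ys where "\<forall>z\<in>torus. f z = Re (tsum xs z)" "\<forall>z\<in>torus. g z = Re (tsum ys z)" unfolding rep_def by blast
  then show ?case unfolding rep_def by (intro exI[of _ "xs @ ys"]) (simp add: tsum_append)
next
  case (mult f g)
  then obtain xs ys where "\<forall>z\<in>torus. f z = Re (tsum xs z)" "\<forall>z\<in>torus. g z = Re (tsum ys z)" unfolding rep_def by blast
  then show ?case unfolding rep_def by (intro exI[of _ "prodl xs ys"]) (simp add: tsum_prodl)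
qed

lemma osc_bound:
  fixes K :: complex and \<beta> T :: real
  assumes "\<beta> \<noteq> 0" "0 \<le> T"
  shows "\<bar>integral {0..T} (\<lambda>t. Re (K * cis (\<beta> * t)))\<bar> \<le> 3 * norm K / \<bar>\<beta>\<bar>"
proof -
  define \<Phi> where "\<Phi> t = (Re K * sin (\<beta> * t) + Im K * cos (\<beta> * t)) / \<beta>" for t
  have eqf: "Re (K * cis (\<beta> * t)) = Re K * cos (\<beta> * t) - Im K * sin (\<beta> * t)" for t
    by (simp add: cis.code)
  have d: "(\<Phi> has_real_derivative (Re K * cos (\<beta> * t) - Im K * sin (\<beta> * t))) (at t within {0..T})" for t
    unfolding \<Phi>_def using assms(1)
    by (auto intro!: derivative_eq_intros simp: field_simps)
  have "((\<lambda>t. Re (K * cis (\<beta> * t))) has_integral (\<Phi> T - \<Phi> 0)) {0..T}"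
    unfolding eqf using d assms(2)
    by (intro fundamental_theorem_of_calculus) (auto simp: has_real_derivative_iff_has_vector_derivative)
  then have i: "integral {0..T} (\<lambda>t. Re (K * cis (\<beta> * t))) = \<Phi> T - \<Phi> 0" by (rule integral_unique)
  have "\<Phi> T - \<Phi> 0 = (Re K * sin (\<beta> * T) + Im K * cos (\<beta> * T) - Im K) / \<beta>"
    unfolding \<Phi>_def by (simp add: diff_divide_distrib)
  also have "\<bar>\<dots>\<bar> = \<bar>Re K * sin (\<beta> * T) + Im K * cos (\<beta> * T) - Im K\<bar> / \<bar>\<beta>\<bar>" by (simp add: abs_divide)
  also have "\<dots> \<le> 3 * norm K / \<bar>\<beta>\<bar>"
  proof (rule divide_right_mono)
    have a: "\<bar>Re K * sin (\<beta> * T)\<bar> \<le> \<bar>Re K\<bar>" by (simp add: abs_mult mult_left_le)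
    have b: "\<bar>Im K * cos (\<beta> * T)\<bar> \<le> \<bar>Im K\<bar>" by (simp add: abs_mult mult_left_le)
    show "\<bar>Re K * sin (\<beta> * T) + Im K * cos (\<beta> * T) - Im K\<bar> \<le> 3 * norm K"
      using a b abs_Re_le_cmod[of K] abs_Im_le_cmod[of K] by linarith
  qed simp
  finally show ?thesis using i by simp
qed

context clk
begin

lemma Good_char: "Good (\<lambda>z. Re (c * chi n z))"
proof -
  define l where "l = (\<Sum>i\<in>UNIV. of_int (n i) * \<omega>$i)"
  define F where "F = (\<lambda>z. Re (c * chi n z))"
  have cF: "continuous_on A F" for A unfolding F_def by (intro continuous_intros chi_cont)
  have Fflow: "F (clock_flow \<omega> s z) = Re (c * chi n z * cis (2 * pi * l * s))" for s z
    unfolding F_def l_def chi_flow by (simp add: algebra_simps)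
  interpret prob_space \<pi> by (rule prob)
  have "Good F"
  proof (cases "l = 0")
    case True
    define C where "C = F (clock \<omega> \<phi> 0)"
    have "range (clock \<omega> \<phi>) \<subseteq> {z. F z = C}"
    proof
      fix x assume "x \<in> range (clock \<omega> \<phi>)"
      then obtain t where "x = clock \<omega> \<phi> t" by auto
      then have "x = clock_flow \<omega> t (clock \<omega> \<phi> 0)" using clock_eq by metis
      then show "x \<in> {z. F z = C}" unfolding C_def using Fflow True by (simp add: F_def)
    qed
    moreover have "closed {z. F z = C}" using cF by (intro closed_Collect_eq continuous_intros) auto
    ultimately have const: "\<And>z. z \<in> Om \<Longrightarrow> F z = C" unfolding clock_Omega_def
      using closure_minimal by blast
    have int: "integral\<^sup>L \<pi> F = C"
    proof -
      have "integral\<^sup>L \<pi> F = (\<integral>z. C \<partial>\<pi>)" using const space_pi by (intro Bochner_Integration.integral_cong) auto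
      then show ?thesis by (simp add: prob_space)
    qed
    show ?thesis unfolding Good_def
    proof (intro conjI cF allI impI exI[of _ 0])
      fix e T \<alpha> :: real and z0 assume *: "0 < e" "0 < T" "0 < \<alpha>" "0 \<le> T/\<alpha>" "z0 \<in> Om"
      have "avg T \<alpha> F z0 = (1/T) * integral {0..T} (\<lambda>t. C)"
        unfolding avg_def using Fflow True const[OF *(5)] by (simp add: F_def)
      also have "\<dots> = C" using *(2) by simp
      finally show "\<bar>avg T \<alpha> F z0 - integral\<^sup>L \<pi> F\<bar> \<le> e" using int *(1) by simp
    qed
  next
    case False
    have neg: "F (clock_flow \<omega> (1 / (2 * l)) z) = - F z" for z
    proof -
      have "2 * pi * l * (1 / (2 * l)) = pi" using False by simp
      then show ?thesis unfolding Fflow by (simp add: F_def)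
    qed
    have "integral\<^sup>L \<pi> F = (\<integral>z. F (clock_flow \<omega> (1 / (2 * l)) z) \<partial>\<pi>)"
      by (rule integral_flow_inv[symmetric]) (rule meas_cont[OF cF])
    also have "\<dots> = - integral\<^sup>L \<pi> F" unfolding neg by simp
    finally have int: "integral\<^sup>L \<pi> F = 0" by simp
    show ?thesis unfolding Good_def
    proof (intro conjI cF allI impI)
      fix e :: real assume e: "0 < e"
      define R0 where "R0 = norm c / (\<bar>l\<bar> * e) + 1"
      show "\<exists>R0. \<forall>T \<alpha> z0. 0 < T \<longrightarrow> 0 < \<alpha> \<longrightarrow> R0 \<le> T/\<alpha> \<longrightarrow> z0 \<in> Om \<longrightarrow>
        \<bar>avg T \<alpha> F z0 - integral\<^sup>L \<pi> F\<bar> \<le> e"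
      proof (intro exI[of _ R0] allI impI)
        fix T \<alpha> z0 assume *: "0 < T" "0 < \<alpha>" "R0 \<le> T/\<alpha>" "z0 \<in> Om"
        define K where "K = c * chi n z0"
        define \<beta> where "\<beta> = 2 * pi * l / \<alpha>"
        have "z0 \<in> torus" using Omega_torus *(4) by blast
        then have nK: "norm K = norm c" unfolding K_def using chi_norm[of z0 n] by (simp add: norm_mult)
        have b0: "\<beta> \<noteq> 0" unfolding \<beta>_def using False *(2) by simp
        have "avg T \<alpha> F z0 = (1/T) * integral {0..T} (\<lambda>t. Re (K * cis (\<beta> * t)))"
          unfolding avg_def Fflow K_def \<beta>_def by (simp add: algebra_simps)
        then have ea: "\<bar>avg T \<alpha> F z0\<bar> = (1/T) * \<bar>integral {0..T} (\<lambda>t. Re (K * cis (\<beta> * t)))\<bar>"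
          using *(1) by (simp add: abs_mult)
        have ob: "\<bar>integral {0..T} (\<lambda>t. Re (K * cis (\<beta> * t)))\<bar> \<le> 3 * norm c / \<bar>\<beta>\<bar>"
          using osc_bound[OF b0 less_imp_le[OF *(1)], of K] unfolding nK .
        have "\<bar>avg T \<alpha> F z0\<bar> \<le> (1/T) * (3 * norm c / \<bar>\<beta>\<bar>)"
          unfolding ea using ob *(1) by (intro mult_left_mono) auto
        also have "\<dots> = 3 * norm c * \<alpha> / (2 * pi * \<bar>l\<bar> * T)"
          unfolding \<beta>_def using *(1,2) False by (simp add: abs_mult abs_divide field_simps)
        also have "\<dots> \<le> norm c * \<alpha> / (\<bar>l\<bar> * T)"
        proof -
          have eq3: "3 * norm c * \<alpha> / (2 * pi * \<bar>l\<bar> * T) = (3 / (2 * pi)) * (norm c * \<alpha> / (\<bar>l\<bar> * T))"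
            by (simp add: field_simps)
          have "3 / (2 * pi) \<le> 1" using pi_gt3 by (simp add: field_simps)
          moreover have "0 \<le> norm c * \<alpha> / (\<bar>l\<bar> * T)" using *(1,2) by simp
          moreover have "0 \<le> 3 / (2 * pi)" by simp
          ultimately show ?thesis unfolding eq3 by (intro mult_left_le_one_le)
        qed
        also have "\<dots> \<le> e"
        proof -
          have "norm c \<le> e * (\<bar>l\<bar> * R0)" unfolding R0_def using e False by (simp add: field_simps)
          also have "\<dots> \<le> e * (\<bar>l\<bar> * (T/\<alpha>))" using *(3) e by (intro mult_left_mono) auto
          finally have "norm c \<le> e * \<bar>l\<bar> * T / \<alpha>" by simp
          then show ?thesis using *(1,2) False by (simp add: field_simps)
        qed
        finally show "\<bar>avg T \<alpha> F z0 - integral\<^sup>L \<pi> F\<bar> \<le> e" using int by simp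
      qed
    qed
  qed
  then show ?thesis unfolding F_def .
qed

lemma Good_tsum: "Good (\<lambda>z. Re (tsum xs z))"
proof (induction xs)
  case Nil then show ?case using Good_zero by simp
next
  case (Cons a xs)
  obtain c n where a: "a = (c, n)" by force
  have "Good (\<lambda>z. Re (c * chi n z) + Re (tsum xs z))" by (intro Good_add Good_char Cons.IH)
  then show ?case by (simp add: a)
qed

lemma Good_cont: assumes "continuous_on Om F" shows "Good F"
proof (rule Good_approx[OF assms])
  fix e :: real assume e: "0 < e"
  obtain g where g: "real_polynomial_function g" "\<And>x. x \<in> Om \<Longrightarrow> \<bar>F x - g x\<bar> < e"
    using Stone_Weierstrass_real_polynomial_function[OF Omega_compact assms e] by blast
  obtain xs where xs: "\<forall>z\<in>torus. g z = Re (tsum xs z)" using rep_poly[OF g(1)] unfolding rep_def by blast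
  have "Good g"
  proof (rule Good_cong[OF Good_tsum[of xs]])
    fix z assume "z \<in> Om"
    then have "z \<in> torus" using Omega_torus by blast
    then show "Re (tsum xs z) = g z" using xs by simp
  qed
  then show "\<exists>G. Good G \<and> (\<forall>z\<in>Om. \<bar>F z - G z\<bar> \<le> e)" using g(2) by (intro exI[of _ g]) (auto intro: less_imp_le)
qed

end

lemma tail_bound:
  fixes f :: "'a \<Rightarrow> 'b::banach" and h :: "'a \<Rightarrow> real"
  assumes fs: "(f has_sum s) A" and hs: "(h has_sum H) A" and le: "\<And>a. a \<in> A \<Longrightarrow> norm (f a) \<le> h a"
    and F: "finite F" "F \<subseteq> A"
  shows "norm (s - sum f F) \<le> H - sum h F"
proof -
  have fsum: "f summable_on A" using fs has_sum_iff by blast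
  have hsum: "h summable_on A" using hs has_sum_iff by blast
  have "f summable_on (A - F)" by (rule summable_on_subset_banach[OF fsum]) blast
  then obtain s1 where s1: "(f has_sum s1) (A - F)" unfolding summable_on_def by blast
  have "h summable_on (A - F)" by (rule summable_on_subset_banach[OF hsum]) blast
  then obtain H1 where H1: "(h has_sum H1) (A - F)" unfolding summable_on_def by blast
  have AF: "F \<union> (A - F) = A" using F by auto
  have d: "F \<inter> (A - F) = {}" by blast
  have "(f has_sum (sum f F + s1)) (F \<union> (A - F))" by (rule has_sum_Un_disjoint[OF has_sum_finite[OF F(1)] s1 d])
  then have "(f has_sum (sum f F + s1)) A" unfolding AF .
  then have es: "s = sum f F + s1" using fs by (rule has_sum_unique[symmetric])
  have "(h has_sum (sum h F + H1)) (F \<union> (A - F))" by (rule has_sum_Un_disjoint[OF has_sum_finite[OF F(1)] H1 d])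
  then have "(h has_sum (sum h F + H1)) A" unfolding AF .
  then have eH: "H = sum h F + H1" using hs by (rule has_sum_unique[symmetric])
  have "norm s1 \<le> H1" by (rule norm_infsum_le[OF s1 H1]) (use le in auto)
  then show ?thesis using es eH by simp
qed

definition cube :: "(real^'k) set" where "cube = {x. \<forall>i. \<bar>x$i\<bar> \<le> 1}"

lemma G0_cont:
  fixes G0 :: "real^'k \<Rightarrow> real^'m" and c :: "('k \<Rightarrow> nat) \<Rightarrow> real^'m"
  assumes G0_coeffs: "(\<lambda>a. norm (c a)) summable_on UNIV"
    and G0_series: "\<forall>x::real^'k. (\<forall>i. \<bar>x$i\<bar> \<le> 1) \<longrightarrow>
                 ((\<lambda>a. (\<Prod>i\<in>UNIV. (x$i) ^ (a i)) *\<^sub>R c a) has_sum G0 x) UNIV"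
  shows "continuous_on cube G0"
proof (rule uniform_limit_theorem)
  let ?f = "\<lambda>F x. \<Sum>a\<in>F. (\<Prod>i\<in>UNIV. (x$i) ^ (a i)) *\<^sub>R c a"
  show "\<forall>\<^sub>F F in finite_subsets_at_top UNIV. continuous_on cube (?f F)"
    by (intro always_eventually allI continuous_intros)
  show "\<not> trivial_limit (finite_subsets_at_top (UNIV :: ('k \<Rightarrow> nat) set))" by simp
  obtain H where H: "((\<lambda>a. norm (c a)) has_sum H) UNIV" using G0_coeffs unfolding summable_on_def by blast
  show "uniform_limit cube ?f G0 (finite_subsets_at_top UNIV)"
  proof (rule uniform_limitI)
    fix e :: real assume e: "0 < e"
    have "((\<lambda>F. \<Sum>a\<in>F. norm (c a)) \<longlongrightarrow> H) (finite_subsets_at_top UNIV)" using H unfolding has_sum_def .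
    then have "\<forall>\<^sub>F F in finite_subsets_at_top UNIV. dist (\<Sum>a\<in>F. norm (c a)) H < e" using e tendstoD by blast
    then obtain X where X: "finite X" "\<forall>Y. finite Y \<and> X \<subseteq> Y \<and> Y \<subseteq> UNIV \<longrightarrow> dist (\<Sum>a\<in>Y. norm (c a)) H < e"
      unfolding eventually_finite_subsets_at_top by blast
    show "\<forall>\<^sub>F F in finite_subsets_at_top UNIV. \<forall>x\<in>cube. dist (?f F x) (G0 x) < e"
      unfolding eventually_finite_subsets_at_top
    proof (intro exI[of _ X] conjI allI impI ballI X(1))
      fix Y and x :: "real^'k" assume Y: "finite Y \<and> X \<subseteq> Y \<and> Y \<subseteq> UNIV" and x: "x \<in> cube"
      have le: "norm ((\<Prod>i\<in>UNIV. (x$i) ^ (a i)) *\<^sub>R c a) \<le> norm (c a)" for a :: "'k \<Rightarrow> nat"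
      proof -
        have "\<bar>\<Prod>i\<in>UNIV. (x$i) ^ (a i)\<bar> \<le> 1"
          using x unfolding cube_def by (auto simp: abs_prod power_abs intro!: prod_le_1 power_le_one)
        then show ?thesis by (simp add: mult_left_le_one_le)
      qed
      have "norm (G0 x - ?f Y x) \<le> H - (\<Sum>a\<in>Y. norm (c a))"
        using tail_bound[OF _ H le] G0_series x Y unfolding cube_def by auto
      also have "\<dots> < e" using X(2) Y by (auto simp: dist_real_def)
      finally show "dist (?f Y x) (G0 x) < e" by (simp add: dist_norm norm_minus_commute)
    qed simp
  qed
qed

definition ReV :: "complex^'k \<Rightarrow> real^'k" where "ReV z = (\<chi> i. Re (z$i))"

lemma ReV_cont: "continuous_on A ReV" unfolding ReV_def by (intro continuous_intros continuous_on_vec_lambda)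

lemma ReV_cube: "z \<in> torus \<Longrightarrow> ReV z \<in> cube"
proof -
  assume "z \<in> torus"
  then have "\<bar>Re (z$i)\<bar> \<le> 1" for i using abs_Re_le_cmod[of "z$i"] unfolding torus_def by simp
  then show ?thesis unfolding ReV_def cube_def by simp
qed

lemma probe_eq: "z \<in> torus \<Longrightarrow> probe_G G0 z = G0 (ReV z)"
proof -
  assume z: "z \<in> torus"
  have "Re ((z$i + inverse (z$i)) / 2) = Re (z$i)" for i
    using torus_cnj[OF z, of i, symmetric] by (simp add: complex_add_cnj)
  then show ?thesis unfolding probe_G_def ReV_def by simp
qed

context clk
begin

definition vavg :: "real \<Rightarrow> real \<Rightarrow> (complex^'k \<Rightarrow> real^'d) \<Rightarrow> complex^'k \<Rightarrow> real^'d" where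
  "vavg T \<alpha> H z0 = (1/T) *\<^sub>R integral {0..T} (\<lambda>t. H (clock_flow \<omega> (t/\<alpha>) z0))"

lemma vavg_bound:
  assumes "continuous_on Om H" "z0 \<in> Om" "0 < T" "\<forall>z\<in>Om. norm (H z) \<le> B"
  shows "norm (vavg T \<alpha> H z0) \<le> B"
proof -
  have "norm (integral {0..T} (\<lambda>t. H (clock_flow \<omega> (t/\<alpha>) z0))) \<le> B * (T - 0)"
    using assms by (intro integral_bound cont_path) (auto intro: flow_Omega)
  then show ?thesis using assms(3) unfolding vavg_def by (simp add: field_simps)
qed

lemma vint_bound:
  fixes H :: "complex^'k \<Rightarrow> real^'d"
  assumes "continuous_on Om H" "\<forall>z\<in>Om. norm (H z) \<le> B"
  shows "norm (integral\<^sup>L \<pi> H) \<le> B"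
proof -
  interpret prob_space \<pi> by (rule prob)
  have "norm (integral\<^sup>L \<pi> H) \<le> (\<integral>x. norm (H x) \<partial>\<pi>)" by (rule Bochner_Integration.integral_norm_bound)
  also have "\<dots> \<le> (\<integral>x. B \<partial>\<pi>)"
    using assms space_pi by (intro integral_mono integrable_cont continuous_intros) auto
  also have "\<dots> = B" by (simp add: prob_space)
  finally show ?thesis by simp
qed

lemma vavg_diff:
  fixes F G :: "complex^'k \<Rightarrow> real^'d"
  assumes "continuous_on Om F" "continuous_on Om G" "z0 \<in> Om"
  shows "vavg T \<alpha> (\<lambda>z. F z - G z) z0 = vavg T \<alpha> F z0 - vavg T \<alpha> G z0"
  unfolding vavg_def using integral_diff[OF integrable_path[OF assms(1,3)] integrable_path[OF assms(2,3)]]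
  by (simp add: scaleR_diff_right)

lemma vavg_sum:
  fixes v :: "'p \<Rightarrow> real^'d"
  assumes P: "finite P" and c: "\<And>p. p \<in> P \<Longrightarrow> continuous_on Om (\<psi> p)" and z0: "z0 \<in> Om"
  shows "vavg T \<alpha> (\<lambda>z. \<Sum>p\<in>P. \<psi> p z *\<^sub>R v p) z0 = (\<Sum>p\<in>P. avg T \<alpha> (\<psi> p) z0 *\<^sub>R v p)"
proof -
  have "((\<lambda>t. \<Sum>p\<in>P. \<psi> p (clock_flow \<omega> (t/\<alpha>) z0) *\<^sub>R v p) has_integral
      (\<Sum>p\<in>P. integral {0..T} (\<lambda>t. \<psi> p (clock_flow \<omega> (t/\<alpha>) z0)) *\<^sub>R v p)) {0..T}"
    using P c z0 by (intro has_integral_sum has_integral_scaleR_left integrable_integral integrable_path) auto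
  then have "integral {0..T} (\<lambda>t. \<Sum>p\<in>P. \<psi> p (clock_flow \<omega> (t/\<alpha>) z0) *\<^sub>R v p)
      = (\<Sum>p\<in>P. integral {0..T} (\<lambda>t. \<psi> p (clock_flow \<omega> (t/\<alpha>) z0)) *\<^sub>R v p)" by (rule integral_unique)
  then show ?thesis unfolding vavg_def avg_def by (simp add: scaleR_sum_right)
qed

lemma vint_sum:
  fixes v :: "'p \<Rightarrow> real^'d"
  assumes P: "finite P" and c: "\<And>p. p \<in> P \<Longrightarrow> continuous_on Om (\<psi> p)"
  shows "(\<integral>z. (\<Sum>p\<in>P. \<psi> p z *\<^sub>R v p) \<partial>\<pi>) = (\<Sum>p\<in>P. integral\<^sup>L \<pi> (\<psi> p) *\<^sub>R v p)"
proof -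
  have "(\<integral>z. (\<Sum>p\<in>P. \<psi> p z *\<^sub>R v p) \<partial>\<pi>) = (\<Sum>p\<in>P. (\<integral>z. \<psi> p z *\<^sub>R v p \<partial>\<pi>))"
    using c by (intro Bochner_Integration.integral_sum integrable_cont continuous_intros) auto
  also have "\<dots> = (\<Sum>p\<in>P. integral\<^sup>L \<pi> (\<psi> p) *\<^sub>R v p)"
    using c by (intro sum.cong refl Bochner_Integration.integral_scaleR_left integrable_cont) auto
  finally show ?thesis .
qed

lemma main_conv:
  fixes f :: "real^'d \<Rightarrow> real^'m \<Rightarrow> real^'d" and Gz :: "complex^'k \<Rightarrow> real^'m"
  assumes cG: "continuous_on Om Gz"
    and fc: "\<And>\<theta>. continuous_on Om (\<lambda>z. f \<theta> (Gz z))"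
    and Lx: "\<And>\<theta> \<xi> \<xi>'. norm (f \<theta> \<xi>' - f \<theta> \<xi>) \<le> Lp * norm (\<xi>' - \<xi>)"
    and Lt: "\<And>\<theta> \<theta>' \<xi>. norm (f \<theta>' \<xi> - f \<theta> \<xi>) \<le> Lp * norm (\<theta>' - \<theta>)"
    and Lp: "0 < Lp" and e: "0 < e"
  shows "\<exists>R0. \<forall>\<theta> T \<alpha> z0. 0 < T \<longrightarrow> 0 < \<alpha> \<longrightarrow> R0 \<le> T/\<alpha> \<longrightarrow> z0 \<in> Om \<longrightarrow>
     norm (vavg T \<alpha> (\<lambda>z. f \<theta> (Gz z)) z0 - (\<integral>z. f \<theta> (Gz z) \<partial>\<pi>)) \<le> (1 + norm \<theta>) * e"
proof -
  define K where "K = Gz ` Om"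
  have Kc: "compact K" unfolding K_def by (rule compact_continuous_image[OF cG Omega_compact])
  define \<delta> where "\<delta> = e / (4 * Lp)"
  have d0: "0 < \<delta>" unfolding \<delta>_def using e Lp by simp
  obtain P where P: "P \<subseteq> K" "finite P" "K \<subseteq> (\<Union>p\<in>P. ball p \<delta>)"
  proof (rule compactE_image[OF Kc, of K "\<lambda>p. ball p \<delta>"])
    show "K \<subseteq> (\<Union>p\<in>K. ball p \<delta>)" using d0 by auto
  qed auto
  define w where "w p \<xi> = max 0 (\<delta> - dist \<xi> p)" for p \<xi> :: "real^'m"
  define W where "W \<xi> = (\<Sum>q\<in>P. w q \<xi>)" for \<xi>
  have w0: "0 \<le> w p \<xi>" for p \<xi> unfolding w_def by simp
  have Wpos: "0 < W \<xi>" if xi: "\<xi> \<in> K" for \<xi>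
  proof -
    obtain q where q: "q \<in> P" "dist q \<xi> < \<delta>" using P(3) xi by auto
    have "0 < w q \<xi>" unfolding w_def using q(2) by (simp add: dist_commute)
    then show ?thesis unfolding W_def using q(1) P(2) w0 by (intro sum_pos2[of P q]) auto
  qed
  define \<psi> where "\<psi> p z = w p (Gz z) / W (Gz z)" for p z
  have GK: "Gz ` Om \<subseteq> K" unfolding K_def by simp
  have c\<psi>: "continuous_on Om (\<psi> p)" for p
  proof -
    have "continuous_on K (\<lambda>\<xi>. w p \<xi> / W \<xi>)"
    proof (rule continuous_on_divide)
      show "continuous_on K (w p)" unfolding w_def by (intro continuous_intros)
      show "continuous_on K W" unfolding W_def w_def by (intro continuous_intros)
      show "\<forall>x\<in>K. W x \<noteq> 0" using Wpos by force
    qed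
    then show ?thesis unfolding \<psi>_def by (rule continuous_on_compose2[OF _ cG GK])
  qed
  have G\<psi>: "Good (\<psi> p)" for p by (rule Good_cont[OF c\<psi>])
  have \<psi>sum: "(\<Sum>p\<in>P. \<psi> p z) = 1" if "z \<in> Om" for z
  proof -
    have "W (Gz z) > 0" using Wpos GK that by blast
    then show ?thesis unfolding \<psi>_def sum_divide_distrib[symmetric] W_def[symmetric] by simp
  qed
  have \<psi>0: "0 \<le> \<psi> p z" if "z \<in> Om" for p z
    unfolding \<psi>_def using w0 Wpos GK that by (simp add: image_subset_iff less_imp_le)
  have \<psi>supp: "dist (Gz z) p < \<delta>" if "z \<in> Om" "\<psi> p z \<noteq> 0" for p z
  proof -
    have "w p (Gz z) \<noteq> 0" using that(2) unfolding \<psi>_def by auto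
    then show ?thesis unfolding w_def by (auto simp: max_def split: if_splits)
  qed
  define M1 where "M1 = (\<Sum>p\<in>P. norm (f 0 p))"
  have M10: "0 \<le> M1" unfolding M1_def by (simp add: sum_nonneg)
  have fb: "norm (f \<theta> p) \<le> (M1 + Lp) * (1 + norm \<theta>)" if "p \<in> P" for \<theta> p
  proof -
    have "norm (f \<theta> p) \<le> norm (f 0 p) + norm (f \<theta> p - f 0 p)" by (rule norm_triangle_sub)
    also have "\<dots> \<le> M1 + Lp * norm \<theta>"
    proof (rule add_mono)
      show "norm (f 0 p) \<le> M1" unfolding M1_def using that P(2) by (intro member_le_sum) auto
      show "norm (f \<theta> p - f 0 p) \<le> Lp * norm \<theta>" using Lt[of \<theta> p 0] by simp
    qed
    also have "\<dots> \<le> (M1 + Lp) * (1 + norm \<theta>)" using M10 Lp by (simp add: algebra_simps)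
    finally show ?thesis .
  qed
  define \<eta> where "\<eta> = e / (2 * (real (card P) + 1) * (M1 + Lp))"
  have \<eta>0: "0 < \<eta>" unfolding \<eta>_def using e Lp M10 by simp
  have "\<forall>p\<in>P. \<exists>R. \<forall>T \<alpha> z0. 0 < T \<longrightarrow> 0 < \<alpha> \<longrightarrow> R \<le> T/\<alpha> \<longrightarrow> z0 \<in> Om \<longrightarrow>
        \<bar>avg T \<alpha> (\<psi> p) z0 - integral\<^sup>L \<pi> (\<psi> p)\<bar> \<le> \<eta>"
    using G\<psi> \<eta>0 unfolding Good_def by blast
  then obtain R where R: "\<And>p T \<alpha> z0. p \<in> P \<Longrightarrow> 0 < T \<Longrightarrow> 0 < \<alpha> \<Longrightarrow> R p \<le> T/\<alpha> \<Longrightarrow> z0 \<in> Om \<Longrightarrow>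
        \<bar>avg T \<alpha> (\<psi> p) z0 - integral\<^sup>L \<pi> (\<psi> p)\<bar> \<le> \<eta>" by metis
  define R0 where "R0 = Max (insert 0 (R ` P))"
  have RR0: "p \<in> P \<Longrightarrow> R p \<le> R0" for p unfolding R0_def using P(2) by simp
  show ?thesis
  proof (intro exI[of _ R0] allI impI)
    fix \<theta> T \<alpha> z0 assume *: "0 < T" "0 < \<alpha>" "R0 \<le> T/\<alpha>" "z0 \<in> Om"
    define g where "g = (\<lambda>z. f \<theta> (Gz z))"
    have gz: "g z = f \<theta> (Gz z)" for z by (simp add: g_def)
    define A where "A z = (\<Sum>p\<in>P. \<psi> p z *\<^sub>R f \<theta> p)" for z
    have cg: "continuous_on Om g" unfolding g_def by (rule fc)
    have cA: "continuous_on Om A" unfolding A_def by (intro continuous_intros c\<psi>)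
    have cgA: "continuous_on Om (\<lambda>z. g z - A z)" by (intro continuous_intros cg cA)
    have close: "norm (g z - A z) \<le> Lp * \<delta>" if z: "z \<in> Om" for z
    proof -
      have "g z - A z = (\<Sum>p\<in>P. \<psi> p z *\<^sub>R (g z - f \<theta> p))"
        unfolding A_def scaleR_diff_right sum_subtractf scaleR_sum_left[symmetric] \<psi>sum[OF z] by simp
      also have "norm \<dots> \<le> (\<Sum>p\<in>P. norm (\<psi> p z *\<^sub>R (g z - f \<theta> p)))" by (rule norm_sum)
      also have "\<dots> \<le> (\<Sum>p\<in>P. \<psi> p z * (Lp * \<delta>))"
      proof (rule sum_mono)
        fix p assume p: "p \<in> P"
        show "norm (\<psi> p z *\<^sub>R (g z - f \<theta> p)) \<le> \<psi> p z * (Lp * \<delta>)"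
        proof (cases "\<psi> p z = 0")
          case True then show ?thesis by simp
        next
          case False
          have "norm (g z - f \<theta> p) \<le> Lp * norm (Gz z - p)" unfolding gz using Lx[of \<theta> "Gz z" p] .
          also have "\<dots> \<le> Lp * \<delta>" using \<psi>supp[OF z False] Lp by (intro mult_left_mono) (auto simp: dist_norm)
          finally have "norm (g z - f \<theta> p) \<le> Lp * \<delta>" .
          then show ?thesis using \<psi>0[OF z] by (simp add: mult_left_mono)
        qed
      qed
      also have "\<dots> = Lp * \<delta>" using \<psi>sum[OF z] by (simp add: sum_distrib_right[symmetric])
      finally show ?thesis .
    qed
    have E1: "norm (vavg T \<alpha> (\<lambda>z. g z - A z) z0 - (\<integral>z. g z - A z \<partial>\<pi>)) \<le> 2 * (Lp * \<delta>)"
    proof -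
      have "norm (vavg T \<alpha> (\<lambda>z. g z - A z) z0) \<le> Lp * \<delta>"
        using close by (intro vavg_bound[OF cgA *(4) *(1)]) auto
      moreover have "norm (\<integral>z. g z - A z \<partial>\<pi>) \<le> Lp * \<delta>"
        using close by (intro vint_bound[OF cgA]) auto
      ultimately show ?thesis using norm_triangle_ineq4[of "vavg T \<alpha> (\<lambda>z. g z - A z) z0" "(\<integral>z. g z - A z \<partial>\<pi>)"] by linarith
    qed
    have eA: "vavg T \<alpha> A z0 - integral\<^sup>L \<pi> A = (\<Sum>p\<in>P. (avg T \<alpha> (\<psi> p) z0 - integral\<^sup>L \<pi> (\<psi> p)) *\<^sub>R f \<theta> p)"
    proof -
      have "vavg T \<alpha> A z0 = (\<Sum>p\<in>P. avg T \<alpha> (\<psi> p) z0 *\<^sub>R f \<theta> p)"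
        unfolding A_def[abs_def] by (rule vavg_sum[OF P(2) c\<psi> *(4)])
      moreover have "integral\<^sup>L \<pi> A = (\<Sum>p\<in>P. integral\<^sup>L \<pi> (\<psi> p) *\<^sub>R f \<theta> p)"
        unfolding A_def[abs_def] by (rule vint_sum[OF P(2) c\<psi>])
      ultimately show ?thesis by (simp add: scaleR_diff_left sum_subtractf)
    qed
    have E2: "norm (vavg T \<alpha> A z0 - integral\<^sup>L \<pi> A) \<le> (e/2) * (1 + norm \<theta>)"
    proof -
      have "norm (vavg T \<alpha> A z0 - integral\<^sup>L \<pi> A) \<le> (\<Sum>p\<in>P. norm ((avg T \<alpha> (\<psi> p) z0 - integral\<^sup>L \<pi> (\<psi> p)) *\<^sub>R f \<theta> p))"
        unfolding eA by (rule norm_sum)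
      also have "\<dots> \<le> (\<Sum>p\<in>P. \<eta> * ((M1 + Lp) * (1 + norm \<theta>)))"
      proof (rule sum_mono)
        fix p assume p: "p \<in> P"
        have a: "\<bar>avg T \<alpha> (\<psi> p) z0 - integral\<^sup>L \<pi> (\<psi> p)\<bar> \<le> \<eta>"
          using R[OF p *(1,2) _ *(4)] RR0[OF p] *(3) by linarith
        show "norm ((avg T \<alpha> (\<psi> p) z0 - integral\<^sup>L \<pi> (\<psi> p)) *\<^sub>R f \<theta> p) \<le> \<eta> * ((M1 + Lp) * (1 + norm \<theta>))"
          unfolding norm_scaleR using a fb[OF p, of \<theta>] \<eta>0 by (intro mult_mono) auto
      qed
      also have "\<dots> = real (card P) * \<eta> * (M1 + Lp) * (1 + norm \<theta>)" by simp
      also have "\<dots> \<le> (e/2) * (1 + norm \<theta>)"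
      proof (rule mult_right_mono)
        have Mpos: "M1 + Lp \<noteq> 0" using Lp M10 by simp
        have C1: "real (card P) + 1 \<noteq> 0" by (metis of_nat_Suc Suc_eq_plus1 of_nat_eq_0_iff nat.distinct(1) add.commute)
        have "\<eta> * (M1 + Lp) = e / (2 * (real (card P) + 1))"
          unfolding \<eta>_def times_divide_eq_left by (rule nonzero_mult_divide_mult_cancel_right[OF Mpos])
        then have "real (card P) * \<eta> * (M1 + Lp) = real (card P) * (e / (2 * (real (card P) + 1)))"
          by (simp add: mult.assoc)
        also have "\<dots> = e / 2 * (real (card P) / (real (card P) + 1))" using C1 by (simp add: field_simps)
        finally have "real (card P) * \<eta> * (M1 + Lp) = e / 2 * (real (card P) / (real (card P) + 1))" .
        also have "\<dots> \<le> e / 2 * 1" using e by (intro mult_left_mono) auto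
        finally show "real (card P) * \<eta> * (M1 + Lp) \<le> e / 2" by simp
      qed simp
      finally show ?thesis .
    qed
    have spl: "vavg T \<alpha> g z0 - integral\<^sup>L \<pi> g =
        (vavg T \<alpha> (\<lambda>z. g z - A z) z0 - (\<integral>z. g z - A z \<partial>\<pi>)) + (vavg T \<alpha> A z0 - integral\<^sup>L \<pi> A)"
    proof -
      have "vavg T \<alpha> (\<lambda>z. g z - A z) z0 = vavg T \<alpha> g z0 - vavg T \<alpha> A z0" by (rule vavg_diff[OF cg cA *(4)])
      moreover have "(\<integral>z. g z - A z \<partial>\<pi>) = integral\<^sup>L \<pi> g - integral\<^sup>L \<pi> A"
        by (intro Bochner_Integration.integral_diff integrable_cont cg cA)
      ultimately show ?thesis by simp
    qed
    have "norm (vavg T \<alpha> g z0 - integral\<^sup>L \<pi> g) \<le> 2 * (Lp * \<delta>) + (e/2) * (1 + norm \<theta>)"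
      unfolding spl by (rule norm_triangle_mono[OF E1 E2])
    also have "2 * (Lp * \<delta>) = e / 2" unfolding \<delta>_def using Lp by simp
    also have "e / 2 + (e/2) * (1 + norm \<theta>) \<le> (1 + norm \<theta>) * e"
    proof -
      have "0 \<le> e * norm \<theta>" using e by simp
      then show ?thesis by (simp add: field_simps; linarith)
    qed
    finally show "norm (vavg T \<alpha> (\<lambda>z. f \<theta> (Gz z)) z0 - (\<integral>z. f \<theta> (Gz z) \<partial>\<pi>)) \<le> (1 + norm \<theta>) * e"
      unfolding g_def .
  qed
qed

end

theorem lemmaA1:
  fixes \<omega> \<phi> :: "real^'k"
    and G0 :: "real^'k \<Rightarrow> real^'m"
    and c :: "('k \<Rightarrow> nat) \<Rightarrow> real^'m"
    and f :: "real^'d \<Rightarrow> real^'m \<Rightarrow> real^'d"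
    and \<pi> :: "(complex^'k) measure"
    and L\<^sub>f :: real
  assumes \<omega>_pos: "\<forall>i. \<omega>$i > 0"
    and G0_coeffs: "(\<lambda>a. norm (c a)) summable_on UNIV"
    and G0_series: "\<forall>x::real^'k. (\<forall>i. \<bar>x$i\<bar> \<le> 1) \<longrightarrow>
                 ((\<lambda>a. (\<Prod>i\<in>UNIV. (x$i) ^ (a i)) *\<^sub>R c a) has_sum G0 x) UNIV"
    and haar: "is_haar_on_Omega \<omega> \<phi> \<pi>"
    and f_cont: "continuous_on UNIV (\<lambda>(\<theta>, \<xi>). f \<theta> \<xi>)"
    and A1_bar: "\<forall>\<theta> \<theta>'. norm ((\<integral>z. f \<theta>' (probe_G G0 z) \<partial>\<pi>) - (\<integral>z. f \<theta> (probe_G G0 z) \<partial>\<pi>))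
                    \<le> L\<^sub>f * norm (\<theta>' - \<theta>)"
    and A1_f: "\<forall>\<theta> \<theta>' \<xi> \<xi>'. norm (f \<theta>' \<xi> - f \<theta> \<xi>) + norm (f \<theta> \<xi>' - f \<theta> \<xi>)
                    \<le> L\<^sub>f * (norm (\<theta>' - \<theta>) + norm (\<xi>' - \<xi>))"
  shows "\<exists>\<epsilon> :: real \<Rightarrow> real.
           (\<forall>r>0. \<epsilon> r \<ge> 0) \<and> (\<epsilon> \<longlongrightarrow> 0) at_top \<and>
           (\<forall>\<theta> :: real^'d. \<forall>z0 \<in> clock_Omega \<omega> \<phi>. \<forall>T>0. \<forall>\<alpha>>0.
              norm ((1 / T) *\<^sub>R integral {0..T}
                 (\<lambda>t. f \<theta> (probe_G G0 (clock_flow \<omega> (t / \<alpha>) z0))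
                       - (\<integral>z. f \<theta> (probe_G G0 z) \<partial>\<pi>)))
              \<le> (1 + norm \<theta>) * \<epsilon> (T / \<alpha>))"
proof -
  interpret clk \<omega> \<phi> \<pi> by (rule clk.intro[OF haar])
  define Gz where "Gz = probe_G G0"
  have cG0: "continuous_on cube G0" by (rule G0_cont[OF G0_coeffs G0_series])
  have cG: "continuous_on Om Gz"
  proof -
    have "ReV ` Om \<subseteq> cube" using ReV_cube Omega_torus by blast
    then have "continuous_on Om (\<lambda>z. G0 (ReV z))" by (rule continuous_on_compose2[OF cG0 ReV_cont])
    moreover have eqz: "G0 (ReV z) = Gz z" if "z \<in> Om" for z
    proof -
      have "z \<in> torus" using Omega_torus that by blast
      then show ?thesis unfolding Gz_def by (rule probe_eq[symmetric])
    qed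
    moreover have "continuous_on Om (\<lambda>z. G0 (ReV z)) = continuous_on Om Gz"
      by (rule continuous_on_cong[OF refl]) (rule eqz)
    ultimately show ?thesis by simp
  qed
  have fc: "continuous_on Om (\<lambda>z. f \<theta> (Gz z))" for \<theta>
  proof -
    have "continuous_on Om (\<lambda>z. (\<lambda>(\<theta>, \<xi>). f \<theta> \<xi>) (\<theta>, Gz z))"
      by (rule continuous_on_compose2[OF f_cont]) (auto intro: continuous_intros cG)
    then show ?thesis by simp
  qed
  define Lp where "Lp = \<bar>L\<^sub>f\<bar> + 1"
  have Lp0: "0 < Lp" unfolding Lp_def by simp
  have Lx: "norm (f \<theta> \<xi>' - f \<theta> \<xi>) \<le> Lp * norm (\<xi>' - \<xi>)" for \<theta> \<xi> \<xi>'
  proof -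
    have "norm (f \<theta> \<xi> - f \<theta> \<xi>) + norm (f \<theta> \<xi>' - f \<theta> \<xi>) \<le> L\<^sub>f * (norm (\<theta> - \<theta>) + norm (\<xi>' - \<xi>))"
      using A1_f by blast
    then have "norm (f \<theta> \<xi>' - f \<theta> \<xi>) \<le> L\<^sub>f * norm (\<xi>' - \<xi>)" by simp
    also have "\<dots> \<le> Lp * norm (\<xi>' - \<xi>)" unfolding Lp_def by (intro mult_right_mono) auto
    finally show ?thesis .
  qed
  have Lt: "norm (f \<theta>' \<xi> - f \<theta> \<xi>) \<le> Lp * norm (\<theta>' - \<theta>)" for \<theta> \<theta>' \<xi>
  proof -
    have "norm (f \<theta>' \<xi> - f \<theta> \<xi>) + norm (f \<theta> \<xi> - f \<theta> \<xi>) \<le> L\<^sub>f * (norm (\<theta>' - \<theta>) + norm (\<xi> - \<xi>))"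
      using A1_f by blast
    then have "norm (f \<theta>' \<xi> - f \<theta> \<xi>) \<le> L\<^sub>f * norm (\<theta>' - \<theta>)" by simp
    also have "\<dots> \<le> Lp * norm (\<theta>' - \<theta>)" unfolding Lp_def by (intro mult_right_mono) auto
    finally show ?thesis .
  qed
  define err where "err \<theta> z0 T \<alpha> = norm ((1 / T) *\<^sub>R integral {0..T}
                 (\<lambda>t. f \<theta> (probe_G G0 (clock_flow \<omega> (t / \<alpha>) z0))
                       - (\<integral>z. f \<theta> (probe_G G0 z) \<partial>\<pi>)))" for \<theta> :: "real^'d" and z0 T \<alpha>
  have err_eq: "err \<theta> z0 T \<alpha> = norm (vavg T \<alpha> (\<lambda>z. f \<theta> (Gz z)) z0 - (\<integral>z. f \<theta> (Gz z) \<partial>\<pi>))"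
    if "z0 \<in> Om" "0 < T" for \<theta> z0 T \<alpha>
  proof -
    define I where "I = (\<integral>z. f \<theta> (Gz z) \<partial>\<pi>)"
    have "integral {0..T} (\<lambda>t. f \<theta> (Gz (clock_flow \<omega> (t / \<alpha>) z0)) - I)
        = integral {0..T} (\<lambda>t. f \<theta> (Gz (clock_flow \<omega> (t / \<alpha>) z0))) - integral {0..T} (\<lambda>t. I)"
      by (rule integral_diff[OF integrable_path[OF fc that(1)] integrable_const_ivl])
    also have "integral {0..T} (\<lambda>t. I) = T *\<^sub>R I" using that(2) by simp
    finally have "(1 / T) *\<^sub>R integral {0..T} (\<lambda>t. f \<theta> (Gz (clock_flow \<omega> (t / \<alpha>) z0)) - I)
        = vavg T \<alpha> (\<lambda>z. f \<theta> (Gz z)) z0 - I"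
      unfolding vavg_def using that(2) by (simp add: scaleR_diff_right)
    then show ?thesis unfolding err_def I_def Gz_def by simp
  qed
  obtain M0 where M0: "\<forall>z\<in>Om. norm (f 0 (Gz z)) \<le> M0"
  proof -
    have "compact ((\<lambda>z. f 0 (Gz z)) ` Om)" by (rule compact_continuous_image[OF fc Omega_compact])
    then show ?thesis using that compact_imp_bounded bounded_iff by (metis image_eqI)
  qed
  define B where "B = 2 * (\<bar>M0\<bar> + Lp)"
  have bound: "err \<theta> z0 T \<alpha> \<le> B * (1 + norm \<theta>)" if "z0 \<in> Om" "0 < T" for \<theta> z0 T \<alpha>
  proof -
    have gb: "\<forall>z\<in>Om. norm (f \<theta> (Gz z)) \<le> \<bar>M0\<bar> + Lp * norm \<theta>"
    proof
      fix z assume z: "z \<in> Om"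
      have "norm (f \<theta> (Gz z)) \<le> norm (f 0 (Gz z)) + norm (f \<theta> (Gz z) - f 0 (Gz z))" by (rule norm_triangle_sub)
      also have "\<dots> \<le> \<bar>M0\<bar> + Lp * norm \<theta>" using M0 z Lt[of \<theta> "Gz z" 0] by (intro add_mono) auto
      finally show "norm (f \<theta> (Gz z)) \<le> \<bar>M0\<bar> + Lp * norm \<theta>" .
    qed
    have "err \<theta> z0 T \<alpha> \<le> norm (vavg T \<alpha> (\<lambda>z. f \<theta> (Gz z)) z0) + norm (\<integral>z. f \<theta> (Gz z) \<partial>\<pi>)"
      unfolding err_eq[OF that] by (rule norm_triangle_ineq4)
    also have "\<dots> \<le> (\<bar>M0\<bar> + Lp * norm \<theta>) + (\<bar>M0\<bar> + Lp * norm \<theta>)"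
      by (intro add_mono vavg_bound[OF fc that(1,2) gb] vint_bound[OF fc gb])
    also have "\<dots> \<le> B * (1 + norm \<theta>)" unfolding B_def using Lp0
      by (simp add: algebra_simps mult_left_mono)
    finally show ?thesis .
  qed
  have B0: "0 \<le> B" unfolding B_def using Lp0 by simp
  define S where "S R = {err \<theta> z0 T \<alpha> / (1 + norm \<theta>) | \<theta> z0 T \<alpha>. z0 \<in> Om \<and> 0 < T \<and> 0 < \<alpha> \<and> T / \<alpha> = R}" for R
  define \<epsilon> where "\<epsilon> R = Sup (S R)" for R
  have S_bdd: "bdd_above (S R)" for R
  proof (rule bdd_aboveI[of _ B])
    fix x assume "x \<in> S R"
    then obtain \<theta> z0 T \<alpha> where x: "x = err \<theta> z0 T \<alpha> / (1 + norm \<theta>)" "z0 \<in> Om" "0 < T" by (auto simp: S_def)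
    have "err \<theta> z0 T \<alpha> \<le> B * (1 + norm \<theta>)" by (rule bound[OF x(2,3)])
    then show "x \<le> B" unfolding x(1) by (simp add: divide_le_eq add_pos_nonneg)
  qed
  have S_mem: "err \<theta> z0 T \<alpha> / (1 + norm \<theta>) \<in> S (T / \<alpha>)" if "z0 \<in> Om" "0 < T" "0 < \<alpha>" for \<theta> z0 T \<alpha>
    unfolding S_def using that by blast
  have S_nn: "0 \<le> x" if "x \<in> S R" for x R
  proof -
    have err_nn: "0 \<le> err \<theta> z0 T \<alpha>" for \<theta> z0 T \<alpha> unfolding err_def by simp
    show ?thesis using that err_nn unfolding S_def by (auto intro!: divide_nonneg_nonneg)
  qed
  have S_ne: "S R \<noteq> {}" if "0 < R" for R
    using S_mem[OF Omega_ne that zero_less_one, of 0] by auto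
  show ?thesis
  proof (intro exI[of _ \<epsilon>] conjI)
    show "\<forall>r>0. \<epsilon> r \<ge> 0"
    proof (intro allI impI)
      fix r :: real assume r: "0 < r"
      obtain x where "x \<in> S r" using S_ne[OF r] by blast
      then show "0 \<le> \<epsilon> r" unfolding \<epsilon>_def using S_nn S_bdd by (meson cSup_upper order_trans)
    qed
  next
    show "(\<epsilon> \<longlongrightarrow> 0) at_top"
    proof (rule tendstoI)
      fix e :: real assume e: "0 < e"
      obtain R0 where R0: "\<forall>\<theta> T \<alpha> z0. 0 < T \<longrightarrow> 0 < \<alpha> \<longrightarrow> R0 \<le> T/\<alpha> \<longrightarrow> z0 \<in> Om \<longrightarrow>
         norm (vavg T \<alpha> (\<lambda>z. f \<theta> (Gz z)) z0 - (\<integral>z. f \<theta> (Gz z) \<partial>\<pi>)) \<le> (1 + norm \<theta>) * (e/2)"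
        using main_conv[OF cG fc Lx Lt Lp0, of "e/2"] e by auto
      show "\<forall>\<^sub>F x in at_top. dist (\<epsilon> x) 0 < e"
        using eventually_ge_at_top[of "max R0 1"]
      proof (rule eventually_mono)
        fix x assume x: "max R0 1 \<le> x"
        have "\<epsilon> x \<le> e/2" unfolding \<epsilon>_def
        proof (rule cSup_least)
          show "S x \<noteq> {}" using S_ne x by simp
          fix y assume "y \<in> S x"
          then obtain \<theta> z0 T \<alpha> where y: "y = err \<theta> z0 T \<alpha> / (1 + norm \<theta>)" "z0 \<in> Om" "0 < T" "0 < \<alpha>" "T / \<alpha> = x"
            by (auto simp: S_def)
          have "err \<theta> z0 T \<alpha> \<le> (1 + norm \<theta>) * (e/2)"
            unfolding err_eq[OF y(2,3)] using R0 y x by auto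
          then show "y \<le> e/2" unfolding y(1) by (simp add: divide_le_eq add_pos_nonneg mult.commute)
        qed
        moreover obtain y where "y \<in> S x" using S_ne x by force
        then have "0 \<le> \<epsilon> x" unfolding \<epsilon>_def using S_nn S_bdd by (meson cSup_upper order_trans)
        ultimately show "dist (\<epsilon> x) 0 < e" using e by simp
      qed
    qed
  next
    show "\<forall>\<theta> :: real^'d. \<forall>z0 \<in> clock_Omega \<omega> \<phi>. \<forall>T>0. \<forall>\<alpha>>0.
              norm ((1 / T) *\<^sub>R integral {0..T}
                 (\<lambda>t. f \<theta> (probe_G G0 (clock_flow \<omega> (t / \<alpha>) z0))
                       - (\<integral>z. f \<theta> (probe_G G0 z) \<partial>\<pi>)))
              \<le> (1 + norm \<theta>) * \<epsilon> (T / \<alpha>)"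
    proof (intro allI ballI impI)
      fix \<theta> :: "real^'d" and z0 and T \<alpha> :: real
      assume z0: "z0 \<in> clock_Omega \<omega> \<phi>" and T: "0 < T" and a: "0 < \<alpha>"
      have "err \<theta> z0 T \<alpha> / (1 + norm \<theta>) \<le> \<epsilon> (T / \<alpha>)"
        unfolding \<epsilon>_def by (rule cSup_upper[OF S_mem[OF z0 T a] S_bdd])
      then have "err \<theta> z0 T \<alpha> \<le> (1 + norm \<theta>) * \<epsilon> (T / \<alpha>)"
        by (simp add: divide_le_eq add_pos_nonneg mult.commute)
      then show "norm ((1 / T) *\<^sub>R integral {0..T}
                 (\<lambda>t. f \<theta> (probe_G G0 (clock_flow \<omega> (t / \<alpha>) z0))
                       - (\<integral>z. f \<theta> (probe_G G0 z) \<partial>\<pi>)))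
              \<le> (1 + norm \<theta>) * \<epsilon> (T / \<alpha>)" unfolding err_def .
    qed
  qed
qed

end
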